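(* Assume (A2). Suppose there is a deterministic $\delta>0$ such that for every $x\in\mathbb Z^d$, $P$-a.s., $$\inf_{f:\{\pm e_i\}_{i=1}^d\to(0,1]}\left[E\Big(\frac{1}{\sum_{|e|=1}f(e)\,\omega(x,x+e)}\ \Big|\ \mathcal F_{\{x\}^c}\Big)^{-1}E\Big(\frac{d(x,\omega)\cdot\ell}{\sum_{|e|=1}f(e)\,\omega(x,x+e)}\ \Big|\ \mathcal F_{\{x\}^c}\Big)\right]\ge\delta .$$ Then (A3) holds for $\ell$ with $\delta(\ell)=\delta$.
   Context: Let $d\ge 1$ and let $S$ be the set of probability vectors $(p(e))_{e\in\mathbb Z^d,|e|=1}$ on the $2d$ nearest-neighbour unit vectors of $\mathbb Z^d$. Let $\Omega=S^{\mathbb Z^d}$. For $\omega\in\Omega$ and $z\in\mathbb Z^d$ write $\omega(z,z+e)$ for the $e$-coordinate of $\omega_z$. For $\omega\in\Omega$ and $z\in\mathbb Z^d$, the quenched law $P^z_\omega$ is the law of the Markov chain $(X_n)_{n\ge0}$ on $\mathbb Z^d$ with $X_0=z$ and $P^z_\omega(X_{n+1}=x+e\mid X_n=x)=\omega(x,x+e)$ for $|e|=1$. $P$ is a probability measure on $\Omega$ which is stationary and ergodic with respect to the spatial shifts of $\mathbb Z^d$; $E$ is expectation under $P$. The annealed law is $\mathbb P^z=P\otimes P^z_\omega$; $\mathbb E^z$ is its expectation. Fix $\ell\in\mathbb Z^d\setminus\{0\}$ with integer coordinates and let $\mathcal E=\{\mathrm{sgn}(\ell_i)e_i\}_{i=1}^d\setminus\{0\}$,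 where $e_1,\dots,e_d$ are the canonical unit vectors and $\mathrm{sgn}(0)=0$. The local drift is $d(x,\omega)=\sum_{|e|=1}e\,\omega(x,x+e)$. For $\Lambda\subset\mathbb Z^d$, $\mathcal F_\Lambda=\sigma(\omega_z:z\in\Lambda)$. (A2) $P(\omega(0,e)>0\text{ for all }|e|=1)=1$, and there is $\kappa>0$ with $P(\min_{e\in\mathcal E}\omega(0,e)\ge\kappa)=1$. Kalikow's chain: for a finite connected $U\subset\mathbb Z^d$ with $0\in U$, let $\partial U$ be its outer vertex boundary, $T_{U^c}=\min\{n\ge0:X_n\in\partial U\}$ and $\mathcal F_{U^c}=\sigma(\omega_z:z\notin U)$. Kalikow's chain is the Markov chain on $U\cup\partial U$ with transition probabilities $\hat P_U(x,x+e)=\mathbb E^0[\sum_{n=0}^{T_{U^c}}1_{\{X_n=x\}}\omega(x,x+e)\mid\mathcal F_{U^c}]\,/\,\mathbb E^0[\sum_{n=0}^{T_{U^c}}1_{\{X_n=x\}}\mid\mathcal F_{U^c}]$ for $x\in U$, $|e|=1$, and $\hat P_U(x,x)=1$ for $x\in\partial U$ (it depends on $\omega$ outside $U$). The Kalikow drift is $\hat d_U(x)=\sum_{|e|=1}e\,\hat P_U(x,x+e)$. (A3) (Kalikow's condition) There is a deterministic $\delta(\ell)>0$ with $\inf_{U,\,x\in U}\hat d_U(x)\cdot\ell\ge\delta(\ell)$ $P$-a.s., the infimum over all finite connected $U\subset\mathbb Z^d$ containing $0$. *)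

theory Defs
  imports "HOL-Probability.Probability"
begin

text \<open>Sites of the lattice Z^d are vectors int^'d ('d a finite index type, d = CARD('d)).
  An environment is w :: site => site => real, where w z e is the e-coordinate of w_z,
  i.e. w(z,z+e), for e a nearest-neighbour unit vector.\<close>

type_synonym 'd site = "int ^ 'd"
type_synonym 'd env = "'d site \<Rightarrow> 'd site \<Rightarrow> real"

definition units :: "'d::finite site set" where
  "units = {e. \<exists>i. e = axis i 1 \<or> e = axis i (-1)}"

definition dotZ :: "'d::finite site \<Rightarrow> 'd site \<Rightarrow> int" where
  "dotZ a b = (\<Sum>i\<in>UNIV. a $ i * b $ i)"

definition Edirs :: "'d::finite site \<Rightarrow> 'd site set" where
  "Edirs l = {axis i (sgn (l $ i)) | i. l $ i \<noteq> 0}"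

definition Omega_M :: "'d::finite env measure" where
  "Omega_M = (\<Pi>\<^sub>M z\<in>UNIV. \<Pi>\<^sub>M e\<in>UNIV. borel)"

definition Fsig :: "'d::finite site set \<Rightarrow> 'd env measure" where
  "Fsig L = vimage_algebra (space Omega_M) (\<lambda>w. restrict w L) (\<Pi>\<^sub>M z\<in>L. \<Pi>\<^sub>M e\<in>UNIV. borel)"

definition shift :: "'d::finite site \<Rightarrow> 'd env \<Rightarrow> 'd env" where
  "shift y w = (\<lambda>z. w (z + y))"

definition stationary :: "'d::finite env measure \<Rightarrow> bool" where
  "stationary P \<longleftrightarrow> (\<forall>y. distr P Omega_M (shift y) = P)"

definition ergodic :: "'d::finite env measure \<Rightarrow> bool" where
  "ergodic P \<longleftrightarrow> (\<forall>A\<in>sets P. (\<forall>y. shift y -` A \<inter> space P = A)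
                      \<longrightarrow> emeasure P A = 0 \<or> emeasure P A = 1)"

definition drift_dot :: "'d::finite site \<Rightarrow> 'd site \<Rightarrow> 'd env \<Rightarrow> real" where
  "drift_dot l x w = (\<Sum>e\<in>units. real_of_int (dotZ e l) * w x e)"

definition qstep :: "'d::finite env \<Rightarrow> 'd site \<Rightarrow> 'd site \<Rightarrow> real" where
  "qstep w a b = (if b - a \<in> units then w a (b - a) else 0)"

text \<open>qpath w U n a b = P^a_w(X_n = b, X_k in U for all k < n).\<close>
fun qpath :: "'d::finite env \<Rightarrow> 'd site set \<Rightarrow> nat \<Rightarrow> 'd site \<Rightarrow> 'd site \<Rightarrow> real" where
  "qpath w U 0 a b = (if a = b then 1 else 0)"
| "qpath w U (Suc n) a b = (\<Sum>y\<in>U. qpath w U n a y * qstep w y b)"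

text \<open>Quenched occupation: E^0_w[sum_{n=0}^{T_{U^c}} 1{X_n = x}] for x in U
  (for x in U the event {X_n = x, n <= T_{U^c}} is {X_n = x, X_k in U for k < n}).\<close>
definition green :: "'d::finite env \<Rightarrow> 'd site set \<Rightarrow> 'd site \<Rightarrow> real" where
  "green w U x = (\<Sum>n. qpath w U n 0 x)"

definition nn_connected :: "'d::finite site set \<Rightarrow> bool" where
  "nn_connected U \<longleftrightarrow> (\<forall>a\<in>U. \<forall>b\<in>U.
     (\<lambda>y z. y \<in> U \<and> z \<in> U \<and> z - y \<in> units)\<^sup>*\<^sup>* a b)"

text \<open>The annealed conditional expectation E^0[. | F_{U^c}] of a quenched-path functional equals
  E[E^0_w[.] | F_{U^c}] since F_{U^c} only involves the environment.\<close>
definition kalikowP :: "'d::finite env measure \<Rightarrow> 'd site set \<Rightarrow> 'd site \<Rightarrow> 'd site \<Rightarrow> 'd env \<Rightarrow> real" where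
  "kalikowP P U x e w =
     real_cond_exp P (Fsig (- U)) (\<lambda>w'. green w' U x * w' x e) w
     / real_cond_exp P (Fsig (- U)) (\<lambda>w'. green w' U x) w"

definition kalikow_drift_dot :: "'d::finite env measure \<Rightarrow> 'd site \<Rightarrow> 'd site set \<Rightarrow> 'd site \<Rightarrow> 'd env \<Rightarrow> real" where
  "kalikow_drift_dot P l U x w = (\<Sum>e\<in>units. real_of_int (dotZ e l) * kalikowP P U x e w)"

end

theory Submission
  imports Defs
begin

definition sx :: "'d::finite env \<Rightarrow> bool" where
  "sx w \<longleftrightarrow> (\<forall>z. (\<forall>e\<in>units. 0 \<le> w z e) \<and> (\<Sum>e\<in>units. w z e) = 1)"

lemma units_eq: "(units :: 'd::finite site set) = range (\<lambda>i. axis i 1) \<union> range (\<lambda>i. axis i (-1))"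
  unfolding units_def by auto

lemma finite_units[simp]: "finite (units :: 'd::finite site set)"
  unfolding units_eq by simp

lemma zero_notin_units[simp]: "(0::'d::finite site) \<notin> units"
  unfolding units_def by (auto simp: axis_eq_0_iff)

lemma units_nz: "e \<in> units \<Longrightarrow> e \<noteq> 0"
  using zero_notin_units by metis

lemma Edirs_sub: "Edirs l \<subseteq> units"
  unfolding Edirs_def units_def by (auto simp: sgn_if)

lemma Edirs_ne: "l \<noteq> 0 \<Longrightarrow> Edirs l \<noteq> {}"
  unfolding Edirs_def by (auto simp: vec_eq_iff)

declare qpath.simps(2)[simp del]
lemmas qpS = qpath.simps(2)

lemma qstep_nonneg: "sx w \<Longrightarrow> 0 \<le> qstep w a b"
  unfolding sx_def qstep_def by auto

lemma qpath_nonneg: "sx w \<Longrightarrow> 0 \<le> qpath w U n a b"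
  by (induction n arbitrary: b) (auto simp: qpS intro!: sum_nonneg mult_nonneg_nonneg qstep_nonneg)

lemma qstep_sum_le:
  assumes "sx w" "finite C"
  shows "(\<Sum>c\<in>C. qstep w y c) \<le> 1"
proof -
  have "(\<Sum>c\<in>C. qstep w y c) = (\<Sum>c\<in>C \<inter> (\<lambda>e. y + e) ` units. qstep w y c)"
    by (rule sum.mono_neutral_right) (auto simp: qstep_def assms(2) image_iff intro!: bexI[where x="_ - y"])
  also have "\<dots> = (\<Sum>c\<in>C \<inter> (\<lambda>e. y + e) ` units. w y (c - y))"
    by (intro sum.cong) (auto simp: qstep_def)
  also have "\<dots> = (\<Sum>e\<in>(\<lambda>c. c - y) ` (C \<inter> (\<lambda>e. y + e) ` units). w y e)"
    by (subst sum.reindex) (auto simp: inj_on_def)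
  also have "\<dots> \<le> (\<Sum>e\<in>units. w y e)"
    using assms by (intro sum_mono2) (auto simp: sx_def)
  also have "\<dots> = 1" using assms by (auto simp: sx_def)
  finally show ?thesis .
qed

lemma ind_mult: "(if a = y then 1 else 0) * (c::real) = (if a = y then c else 0)"
  by simp

lemma ind_mult2: "(c::real) * (if a = y then 1 else 0) = (if a = y then c else 0)"
  by simp

lemma qpath_one: "finite U \<Longrightarrow> qpath w U (Suc 0) a b = (if a \<in> U then qstep w a b else 0)"
  by (simp add: qpS ind_mult sum.delta')

lemma CK_Suc:
  assumes "finite U"
  shows "qpath w U (m + Suc n) a b = (\<Sum>y\<in>U. qpath w U m a y * qpath w U (Suc n) y b)"
proof (induction n arbitrary: b)
  case 0
  show ?case using assms by (simp add: qpS ind_mult sum.delta')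
next
  case (Suc n)
  have "qpath w U (m + Suc (Suc n)) a b = (\<Sum>z\<in>U. qpath w U (m + Suc n) a z * qstep w z b)"
    by (simp add: qpS)
  also have "\<dots> = (\<Sum>z\<in>U. \<Sum>y\<in>U. qpath w U m a y * qpath w U (Suc n) y z * qstep w z b)"
    by (simp only: Suc.IH sum_distrib_right)
  also have "\<dots> = (\<Sum>y\<in>U. \<Sum>z\<in>U. qpath w U m a y * qpath w U (Suc n) y z * qstep w z b)"
    by (rule sum.swap)
  also have "\<dots> = (\<Sum>y\<in>U. qpath w U m a y * qpath w U (Suc (Suc n)) y b)"
  proof -
    have eq: "qpath w U (Suc (Suc n)) y b = (\<Sum>z\<in>U. qpath w U (Suc n) y z * qstep w z b)" for y
      by (rule qpath.simps(2))
    show ?thesis by (simp only: eq sum_distrib_left mult.assoc)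
  qed
  finally show ?case .
qed

lemma CK_in:
  assumes "finite U" "b \<in> U"
  shows "qpath w U (m + n) a b = (\<Sum>y\<in>U. qpath w U m a y * qpath w U n y b)"
proof (cases n)
  case 0
  then show ?thesis using assms by (simp add: ind_mult2 sum.delta)
next
  case (Suc k)
  then show ?thesis using CK_Suc[OF assms(1)] by simp
qed

lemma qpath_out:
  assumes "a \<notin> V" "n \<ge> 1" "finite V"
  shows "qpath w V n a b = 0"
  using assms(2)
proof (induction n arbitrary: b)
  case 0 then show ?case by simp
next
  case (Suc n)
  show ?case
  proof (cases n)
    case 0 then show ?thesis using assms(1,3) by (simp add: qpS ind_mult sum.delta')
  next
    case (Suc k) then show ?thesis using Suc.IH by (simp add: qpS)
  qed
qed

lemma decomp:
  assumes "finite U" "x \<in> U"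
  shows "qpath w U n a b = qpath w (U - {x}) n a b
           + (\<Sum>k<n. qpath w (U - {x}) k a x * qpath w U (n - k) x b)"
proof (induction n arbitrary: b)
  case 0 then show ?case by simp
next
  case (Suc n)
  let ?V = "U - {x}"
  have "qpath w U (Suc n) a b = (\<Sum>y\<in>U. qpath w U n a y * qstep w y b)" by (simp add: qpS)
  also have "\<dots> = (\<Sum>y\<in>U. qpath w ?V n a y * qstep w y b)
      + (\<Sum>y\<in>U. (\<Sum>k<n. qpath w ?V k a x * qpath w U (n - k) x y) * qstep w y b)"
    by (simp add: Suc distrib_right sum.distrib)
  also have "(\<Sum>y\<in>U. qpath w ?V n a y * qstep w y b)
      = qpath w ?V (Suc n) a b + qpath w ?V n a x * qstep w x b"
    using assms by (simp add: qpS sum.remove[of U x] add.commute)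
  also have "(\<Sum>y\<in>U. (\<Sum>k<n. qpath w ?V k a x * qpath w U (n - k) x y) * qstep w y b)
      = (\<Sum>k<n. qpath w ?V k a x * qpath w U (Suc n - k) x b)"
  proof -
    have "(\<Sum>y\<in>U. (\<Sum>k<n. qpath w ?V k a x * qpath w U (n - k) x y) * qstep w y b)
        = (\<Sum>k<n. qpath w ?V k a x * (\<Sum>y\<in>U. qpath w U (n - k) x y * qstep w y b))"
      by (simp add: sum_distrib_right sum_distrib_left mult.assoc sum.swap[of _ U])
    also have "\<dots> = (\<Sum>k<n. qpath w ?V k a x * qpath w U (Suc n - k) x b)"
      by (intro sum.cong refl) (simp add: Suc_diff_le qpS)
    finally show ?thesis .
  qed
  finally have "qpath w U (Suc n) a b = qpath w ?V (Suc n) a b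
     + (qpath w ?V n a x * qstep w x b + (\<Sum>k<n. qpath w ?V k a x * qpath w U (Suc n - k) x b))"
    by simp
  moreover have "qpath w U (Suc n - n) x b = qstep w x b"
    using assms by (simp only: Suc_diff_le order_refl diff_self_eq_0 qpath_one) simp
  ultimately show ?case by simp
qed

definition Tm :: "'d::finite env \<Rightarrow> 'd site set \<Rightarrow> nat \<Rightarrow> 'd site \<Rightarrow> real" where
  "Tm w U n a = (\<Sum>b\<in>U. qpath w U n a b)"

lemma Tm_nonneg: "sx w \<Longrightarrow> 0 \<le> Tm w U n a"
  unfolding Tm_def by (intro sum_nonneg qpath_nonneg)

lemma Tm_0: "finite U \<Longrightarrow> Tm w U 0 a = (if a \<in> U then 1 else 0)"
  unfolding Tm_def by (simp add: sum.delta')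

lemma mass:
  assumes "sx w" "finite U" "finite B" "B \<inter> U = {}"
  shows "Tm w U (Suc n) a + (\<Sum>b\<in>B. qpath w U (Suc n) a b) \<le> Tm w U n a"
proof -
  have "Tm w U (Suc n) a + (\<Sum>b\<in>B. qpath w U (Suc n) a b) = (\<Sum>c\<in>U \<union> B. qpath w U (Suc n) a c)"
    unfolding Tm_def using assms by (subst sum.union_disjoint) auto
  also have "\<dots> = (\<Sum>c\<in>U \<union> B. \<Sum>y\<in>U. qpath w U n a y * qstep w y c)" by (simp add: qpS)
  also have "\<dots> = (\<Sum>y\<in>U. qpath w U n a y * (\<Sum>c\<in>U \<union> B. qstep w y c))"
    by (simp add: sum_distrib_left sum.swap[of _ "U \<union> B"])
  also have "\<dots> \<le> (\<Sum>y\<in>U. qpath w U n a y * 1)"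
    using assms by (intro sum_mono mult_left_mono qstep_sum_le qpath_nonneg) auto
  also have "\<dots> = Tm w U n a" by (simp add: Tm_def)
  finally show ?thesis .
qed

lemma Tm_Suc_le: "sx w \<Longrightarrow> finite U \<Longrightarrow> Tm w U (Suc n) a \<le> Tm w U n a"
  using mass[of w U "{}" n a] by simp

lemma Tm_mono: assumes "sx w" "finite U" "n \<le> m" shows "Tm w U m a \<le> Tm w U n a"
  using assms(3)
proof (induction m rule: dec_induct)
  case (step m) then show ?case using Tm_Suc_le[of w U m a] assms by linarith
qed simp

lemma Tm_le1: "sx w \<Longrightarrow> finite U \<Longrightarrow> Tm w U n a \<le> 1"
  using Tm_mono[of w U 0 n a] Tm_0[of U w a] by (auto split: if_splits)

lemma hit_le1:
  assumes "sx w" "finite V" "x \<notin> V"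
  shows "(\<Sum>n<M. qpath w V n y x) \<le> 1"
proof -
  have *: "(\<Sum>n<M. qpath w V (Suc n) y x) + Tm w V M y \<le> Tm w V 0 y" for M
  proof (induction M)
    case 0 then show ?case by simp
  next
    case (Suc M)
    have "Tm w V (Suc M) y + (\<Sum>b\<in>{x}. qpath w V (Suc M) y b) \<le> Tm w V M y"
      using assms by (intro mass) auto
    then have "Tm w V (Suc M) y + qpath w V (Suc M) y x \<le> Tm w V M y" by simp
    then show ?case using Suc unfolding sum.lessThan_Suc by linarith
  qed
  show ?thesis
  proof (cases M)
    case 0 then show ?thesis by simp
  next
    case (Suc M')
    have "(\<Sum>n<M. qpath w V n y x) = qpath w V 0 y x + (\<Sum>n<M'. qpath w V (Suc n) y x)"
      unfolding Suc by (rule sum.lessThan_Suc_shift)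
    also have "\<dots> \<le> qpath w V 0 y x + Tm w V 0 y"
      using *[of M'] Tm_nonneg[OF assms(1), of V M' y] by simp
    also have "\<dots> \<le> 1" using assms by (simp add: Tm_0)
    finally show ?thesis .
  qed
qed

lemma straight:
  assumes "sx w" "finite U" "e \<in> units" "\<forall>z. \<kappa> \<le> w z e" "0 \<le> \<kappa>"
    and "\<forall>i<j. a + int i *s e \<in> U"
  shows "\<kappa> ^ j \<le> qpath w U j a (a + int j *s e)"
  using assms(6)
proof (induction j)
  case 0 then show ?case by simp
next
  case (Suc j)
  let ?y = "a + int j *s e"
  have yU: "?y \<in> U" using Suc.prems by auto
  have st: "qstep w ?y (a + int (Suc j) *s e) = w ?y e"
  proof -
    have "a + int (Suc j) *s e - ?y = e" by (simp add: vector_sadd_rdistrib algebra_simps)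
    then show ?thesis using assms(3) by (simp add: qstep_def)
  qed
  have "\<kappa> ^ Suc j = \<kappa> ^ j * \<kappa>" by simp
  also have "\<dots> \<le> qpath w U j a ?y * qstep w ?y (a + int (Suc j) *s e)"
    unfolding st using Suc assms by (intro mult_mono qpath_nonneg) auto
  also have "\<dots> \<le> (\<Sum>y\<in>U. qpath w U j a y * qstep w y (a + int (Suc j) *s e))"
    using yU assms by (intro member_le_sum[where f="\<lambda>y. qpath w U j a y * qstep w y _"]
        mult_nonneg_nonneg qpath_nonneg qstep_nonneg) auto
  finally show ?case by (simp add: qpS)
qed

lemma line_inj:
  assumes "e \<noteq> (0::'d::finite site)"
  shows "inj (\<lambda>i::nat. a + int i *s e)"
proof
  fix i j :: nat assume "a + int i *s e = a + int j *s e"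
  then have "int i *s e = int j *s e" by simp
  moreover obtain k where "e $ k \<noteq> 0" using assms by (auto simp: vec_eq_iff)
  ultimately show "i = j" by (auto simp: vec_eq_iff)
qed

lemma exit_bound:
  assumes "sx w" "finite U" "e \<in> units" "\<forall>z. \<kappa> \<le> w z e" "0 < \<kappa>" "a \<in> U"
  shows "Tm w U (card U) a \<le> 1 - \<kappa> ^ card U"
proof -
  let ?p = "\<lambda>i::nat. a + int i *s e"
  have "\<exists>i\<le>card U. ?p i \<notin> U"
  proof (rule ccontr)
    assume "\<not> ?thesis"
    then have sub: "?p ` {..card U} \<subseteq> U" by auto
    have "card (?p ` {..card U}) = Suc (card U)"
      using line_inj[OF units_nz[OF assms(3)], of a] by (simp add: card_image inj_on_subset)
    then show False using card_mono[OF assms(2) sub] by simp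
  qed
  define j where "j = (LEAST i. ?p i \<notin> U)"
  have pj: "?p j \<notin> U" unfolding j_def by (rule LeastI_ex) (use \<open>\<exists>i\<le>card U. ?p i \<notin> U\<close> in blast)
  have jle: "j \<le> card U" unfolding j_def using \<open>\<exists>i\<le>card U. ?p i \<notin> U\<close> by (meson Least_le order_trans)
  have before: "\<forall>i<j. ?p i \<in> U" unfolding j_def using not_less_Least by blast
  have "j \<noteq> 0" using pj assms(6) by (cases j) auto
  then obtain j' where j': "j = Suc j'" by (cases j) auto
  have k1: "\<kappa> \<le> 1"
  proof -
    have "\<kappa> \<le> w 0 e" using assms by auto
    also have "\<dots> \<le> (\<Sum>e\<in>units. w 0 e)"
      using assms by (intro member_le_sum) (auto simp: sx_def)
    finally show ?thesis using assms(1) by (simp add: sx_def)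
  qed
  have "Tm w U (Suc j') a + (\<Sum>b\<in>{?p j}. qpath w U (Suc j') a b) \<le> Tm w U j' a"
    using assms pj j' by (intro mass) auto
  also have "\<dots> \<le> 1" using Tm_le1 assms by auto
  finally have "Tm w U j a \<le> 1 - qpath w U j a (?p j)" using j' by simp
  also have "\<dots> \<le> 1 - \<kappa> ^ j" using straight[OF assms(1-4) _ before] assms(5) by simp
  also have "\<dots> \<le> 1 - \<kappa> ^ card U" using k1 assms(5) jle by (simp add: power_decreasing)
  finally show ?thesis using Tm_mono[OF assms(1,2) jle, of a] by linarith
qed

definition gd :: "'d::finite env \<Rightarrow> 'd site \<Rightarrow> real \<Rightarrow> bool" where
  "gd w e \<kappa> \<longleftrightarrow> sx w \<and> e \<in> units \<and> (\<forall>z. \<kappa> \<le> w z e) \<and> 0 < \<kappa>"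

lemma gd_k1: assumes "gd w e \<kappa>" shows "\<kappa> \<le> 1"
proof -
  have "\<kappa> \<le> w 0 e" using assms by (auto simp: gd_def)
  also have "\<dots> \<le> (\<Sum>e\<in>units. w 0 e)"
    using assms by (intro member_le_sum) (auto simp: sx_def gd_def)
  finally show ?thesis using assms by (simp add: sx_def gd_def)
qed

lemma Tm_geo_step:
  assumes "gd w e \<kappa>" "finite U"
  shows "Tm w U (m + card U) a \<le> (1 - \<kappa> ^ card U) * Tm w U m a"
proof -
  have sx: "sx w" using assms by (simp add: gd_def)
  have "Tm w U (m + card U) a = (\<Sum>b\<in>U. \<Sum>y\<in>U. qpath w U m a y * qpath w U (card U) y b)"
    unfolding Tm_def using assms by (intro sum.cong refl CK_in) auto
  also have "\<dots> = (\<Sum>y\<in>U. \<Sum>b\<in>U. qpath w U m a y * qpath w U (card U) y b)"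
    by (rule sum.swap)
  also have "\<dots> = (\<Sum>y\<in>U. qpath w U m a y * Tm w U (card U) y)"
    unfolding Tm_def by (simp only: sum_distrib_left)
  also have "\<dots> \<le> (\<Sum>y\<in>U. qpath w U m a y * (1 - \<kappa> ^ card U))"
    using assms exit_bound[of w U e \<kappa>] by (intro sum_mono mult_left_mono qpath_nonneg sx) (auto simp: gd_def)
  also have "\<dots> = (1 - \<kappa> ^ card U) * Tm w U m a"
    unfolding Tm_def sum_distrib_right[symmetric] by (rule mult.commute)
  finally show ?thesis .
qed

lemma Tm_geo:
  assumes "gd w e \<kappa>" "finite U"
  shows "Tm w U (k * card U) a \<le> (1 - \<kappa> ^ card U) ^ k"
proof (induction k)
  case 0 then show ?case using Tm_le1[of w U 0 a] assms by (simp add: gd_def)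
next
  case (Suc k)
  have th: "0 \<le> 1 - \<kappa> ^ card U" using gd_k1[OF assms(1)] assms(1)
    by (simp add: gd_def power_le_one)
  have "Tm w U (Suc k * card U) a = Tm w U (k * card U + card U) a" by (simp add: add.commute)
  also have "\<dots> \<le> (1 - \<kappa> ^ card U) * Tm w U (k * card U) a" by (rule Tm_geo_step[OF assms])
  also have "\<dots> \<le> (1 - \<kappa> ^ card U) * (1 - \<kappa> ^ card U) ^ k"
    using Suc th by (intro mult_left_mono) auto
  finally show ?case by simp
qed

lemma Tm_sum_bound:
  assumes "gd w e \<kappa>" "finite U" "U \<noteq> {}"
  shows "(\<Sum>n<M. Tm w U n a) \<le> real (card U) / \<kappa> ^ card U"
proof -
  let ?N = "card U" and ?t = "1 - \<kappa> ^ card U"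
  have sx: "sx w" using assms by (simp add: gd_def)
  have N1: "?N \<ge> 1" using assms by (simp add: Suc_leI card_gt_0_iff)
  have kp: "0 < \<kappa> ^ ?N" using assms by (simp add: gd_def)
  have th: "0 \<le> ?t" using gd_k1[OF assms(1)] assms(1) by (simp add: gd_def power_le_one)
  have "(\<Sum>n<M. Tm w U n a) \<le> (\<Sum>n<M * ?N. Tm w U n a)"
    using N1 by (intro sum_mono2) (auto intro: Tm_nonneg sx)
  also have "\<dots> = (\<Sum>k<M. \<Sum>n\<in>{k * ?N..<k * ?N + ?N}. Tm w U n a)"
    by (rule sum.nat_group[symmetric])
  also have "\<dots> \<le> (\<Sum>k<M. \<Sum>n\<in>{k * ?N..<k * ?N + ?N}. ?t ^ k)"
    using Tm_mono[OF sx assms(2)] Tm_geo[OF assms(1,2)]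
    by (intro sum_mono) (meson atLeastLessThan_iff order_trans)
  also have "\<dots> = real ?N * (\<Sum>k<M. ?t ^ k)" by (simp add: sum_distrib_left)
  also have "\<dots> \<le> real ?N * (1 / (1 - ?t))"
  proof (intro mult_left_mono)
    have "?t \<noteq> 1" using kp by linarith
    then have "(\<Sum>k<M. ?t ^ k) = (1 - ?t ^ M) / (1 - ?t)" using sum_gp_strict[of ?t M] by presburger
    also have "\<dots> \<le> 1 / (1 - ?t)" using th kp assms(1) by (intro divide_right_mono) (auto simp: zero_le_power gd_def)
    finally show "(\<Sum>k<M. ?t ^ k) \<le> 1 / (1 - ?t)" .
  qed auto
  finally show ?thesis by simp
qed

lemma qpath_summable:
  assumes "gd w e \<kappa>" "finite U" "b \<in> U"
  shows "summable (\<lambda>n. qpath w U n a b)"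
    and "(\<Sum>n. qpath w U n a b) \<le> real (card U) / \<kappa> ^ card U"
    and "0 \<le> (\<Sum>n. qpath w U n a b)"
proof -
  have sx: "sx w" using assms by (simp add: gd_def)
  have le: "qpath w U n a b \<le> Tm w U n a" for n
    unfolding Tm_def using assms sx by (intro member_le_sum qpath_nonneg) auto
  have pb: "(\<Sum>n<M. qpath w U n a b) \<le> real (card U) / \<kappa> ^ card U" for M
  proof -
    have "(\<Sum>n<M. qpath w U n a b) \<le> (\<Sum>n<M. Tm w U n a)" by (intro sum_mono le)
    also have "\<dots> \<le> real (card U) / \<kappa> ^ card U" using Tm_sum_bound[OF assms(1,2)] assms(3) by auto
    finally show ?thesis .
  qed
  show s: "summable (\<lambda>n. qpath w U n a b)"
    using pb by (intro summableI_nonneg_bounded qpath_nonneg sx)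
  show "(\<Sum>n. qpath w U n a b) \<le> real (card U) / \<kappa> ^ card U"
    using pb by (intro suminf_le_const s)
  show "0 \<le> (\<Sum>n. qpath w U n a b)" by (intro suminf_nonneg s qpath_nonneg sx)
qed

definition hh :: "'d::finite env \<Rightarrow> 'd site set \<Rightarrow> 'd site \<Rightarrow> 'd site \<Rightarrow> real" where
  "hh w U x y = (\<Sum>k. qpath w (U - {x}) k y x)"

definition RR :: "'d::finite env \<Rightarrow> 'd site set \<Rightarrow> 'd site \<Rightarrow> real" where
  "RR w U x = (\<Sum>m. qpath w U m x x)"

definition SS :: "'d::finite env \<Rightarrow> 'd site set \<Rightarrow> 'd site \<Rightarrow> real" where
  "SS w U x = (\<Sum>e\<in>units. (1 - hh w U x (x + e)) * w x e)"

lemma hh_props: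
  assumes "sx w" "finite U"
  shows "summable (\<lambda>k. qpath w (U - {x}) k y x)" "0 \<le> hh w U x y" "hh w U x y \<le> 1"
proof -
  have pb: "(\<Sum>n<M. qpath w (U - {x}) n y x) \<le> 1" for M
    using assms by (intro hit_le1) auto
  show s: "summable (\<lambda>k. qpath w (U - {x}) k y x)"
    using pb by (intro summableI_nonneg_bounded qpath_nonneg assms)
  show "0 \<le> hh w U x y" unfolding hh_def by (intro suminf_nonneg s qpath_nonneg assms)
  show "hh w U x y \<le> 1" unfolding hh_def using pb by (intro suminf_le_const s)
qed

lemma hh_out:
  assumes "finite U" "y \<notin> U" "y \<noteq> x"
  shows "hh w U x y = 0"
proof -
  have "qpath w (U - {x}) k y x = 0" for k
    using assms qpath_out[of y "U - {x}" k w x] by (cases k) auto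
  then show ?thesis unfolding hh_def by simp
qed

lemma decomp_x:
  assumes "finite U" "x \<in> U"
  shows "qpath w U n a x = (\<Sum>k\<le>n. qpath w (U - {x}) k a x * qpath w U (n - k) x x)"
proof -
  have "qpath w U n a x = qpath w (U - {x}) n a x
           + (\<Sum>k<n. qpath w (U - {x}) k a x * qpath w U (n - k) x x)"
    by (rule decomp[OF assms])
  also have "\<dots> = (\<Sum>k\<le>n. qpath w (U - {x}) k a x * qpath w U (n - k) x x)"
    by (simp add: lessThan_Suc_atMost[symmetric] add.commute)
  finally show ?thesis .
qed

lemma green_decomp:
  assumes "gd w e \<kappa>" "finite U" "x \<in> U"
  shows "(\<Sum>n. qpath w U n a x) = hh w U x a * RR w U x"
proof -
  have sx: "sx w" using assms by (simp add: gd_def)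
  have s1: "summable (\<lambda>k. norm (qpath w (U - {x}) k a x))"
    using hh_props[OF sx assms(2)] qpath_nonneg[OF sx] by simp
  have s2: "summable (\<lambda>k. norm (qpath w U k x x))"
    using qpath_summable[OF assms] qpath_nonneg[OF sx] by simp
  have "(\<lambda>n. qpath w U n a x) sums (hh w U x a * RR w U x)"
    using Cauchy_product_sums[OF s1 s2] unfolding hh_def RR_def decomp_x[OF assms(2,3), symmetric] .
  then show ?thesis by (rule sums_unique[symmetric])
qed

lemma RR_eq:
  assumes "gd w e \<kappa>" "finite U" "x \<in> U"
  shows "RR w U x * (1 - (\<Sum>y\<in>U. qstep w x y * hh w U x y)) = 1"
proof -
  have sx: "sx w" using assms by (simp add: gd_def)
  let ?c = "\<lambda>k. \<Sum>y\<in>U. qstep w x y * qpath w (U - {x}) k y x"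
  let ?r = "\<lambda>m. qpath w U m x x"
  have step: "?r (Suc m) = (\<Sum>k\<le>m. ?c k * ?r (m - k))" for m
  proof -
    have "?r (Suc m) = qpath w U (Suc 0 + m) x x" by simp
    also have "\<dots> = (\<Sum>y\<in>U. qpath w U (Suc 0) x y * qpath w U m y x)"
      using assms by (intro CK_in) auto
    also have "\<dots> = (\<Sum>y\<in>U. qstep w x y * (\<Sum>k\<le>m. qpath w (U - {x}) k y x * ?r (m - k)))"
    proof (intro sum.cong refl)
      fix y assume "y \<in> U"
      have e1: "qpath w U (Suc 0) x y = qstep w x y" using qpath_one[OF assms(2), of w x y] assms(3) by simp
      have e2: "qpath w U m y x = (\<Sum>k\<le>m. qpath w (U - {x}) k y x * ?r (m - k))"
        by (rule decomp_x[OF assms(2,3)])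
      show "qpath w U (Suc 0) x y * qpath w U m y x = qstep w x y * (\<Sum>k\<le>m. qpath w (U - {x}) k y x * ?r (m - k))"
        unfolding e1 e2 ..
    qed
    also have "\<dots> = (\<Sum>y\<in>U. \<Sum>k\<le>m. qstep w x y * qpath w (U - {x}) k y x * ?r (m - k))"
      by (simp only: sum_distrib_left mult.assoc)
    also have "\<dots> = (\<Sum>k\<le>m. \<Sum>y\<in>U. qstep w x y * qpath w (U - {x}) k y x * ?r (m - k))"
      by (rule sum.swap)
    also have "\<dots> = (\<Sum>k\<le>m. ?c k * ?r (m - k))"
      by (simp only: sum_distrib_right)
    finally show ?thesis .
  qed
  have sc: "summable (\<lambda>k. norm (?c k))"
  proof -
    have "summable (\<lambda>k. ?c k)"
      using hh_props[OF sx assms(2)] by (intro summable_sum summable_mult)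
    moreover have "0 \<le> ?c k" for k using sx by (intro sum_nonneg mult_nonneg_nonneg qstep_nonneg qpath_nonneg)
    ultimately show ?thesis by simp
  qed
  have sr: "summable (\<lambda>k. norm (?r k))"
    using qpath_summable[OF assms] qpath_nonneg[OF sx] by simp
  have sumc: "(\<Sum>k. ?c k) = (\<Sum>y\<in>U. qstep w x y * hh w U x y)"
    unfolding hh_def using hh_props[OF sx assms(2)]
    by (subst suminf_sum) (auto intro!: summable_mult simp: suminf_mult)
  have "(\<lambda>m. ?r (Suc m)) sums ((\<Sum>k. ?c k) * RR w U x)"
    using Cauchy_product_sums[OF sc sr] unfolding RR_def step[symmetric] .
  then have "(\<Sum>m. ?r (Suc m)) = (\<Sum>k. ?c k) * RR w U x" by (rule sums_unique[symmetric])
  moreover have "(\<Sum>m. ?r (Suc m)) = RR w U x - 1"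
    unfolding RR_def using qpath_summable(1)[OF assms] by (subst suminf_split_head) auto
  ultimately show ?thesis unfolding sumc by (simp add: algebra_simps)
qed

lemma reindex_units:
  assumes "finite U" "\<And>y. y \<notin> U \<Longrightarrow> y \<noteq> x \<Longrightarrow> g y = 0"
  shows "(\<Sum>y\<in>U. qstep w x y * g y) = (\<Sum>e\<in>units. w x e * g (x + e))"
proof -
  have "(\<Sum>e\<in>units. w x e * g (x + e)) = (\<Sum>y\<in>(\<lambda>e. x + e) ` units. w x (y - x) * g y)"
    by (subst sum.reindex) (auto simp: inj_on_def)
  also have "\<dots> = (\<Sum>y\<in>(\<lambda>e. x + e) ` units. qstep w x y * g y)"
    by (intro sum.cong refl) (auto simp: qstep_def)
  also have "\<dots> = (\<Sum>y\<in>U \<inter> (\<lambda>e. x + e) ` units. qstep w x y * g y)"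
  proof (rule sum.mono_neutral_right)
    show "\<forall>y\<in>(\<lambda>e. x + e) ` units - U \<inter> (\<lambda>e. x + e) ` units. qstep w x y * g y = 0"
      using assms(2) units_nz by force
  qed auto
  also have "\<dots> = (\<Sum>y\<in>U. qstep w x y * g y)"
    by (rule sum.mono_neutral_left) (auto simp: assms qstep_def image_iff intro!: bexI[where x="_ - x"])
  finally show ?thesis by simp
qed

lemma SS_eq:
  assumes "gd w e \<kappa>" "finite U" "x \<in> U"
  shows "RR w U x * SS w U x = 1" "0 < SS w U x" "1 \<le> RR w U x"
    "(\<Sum>n. qpath w U n a x) = hh w U x a / SS w U x"
proof -
  have sx: "sx w" using assms by (simp add: gd_def)
  have "SS w U x = (\<Sum>e\<in>units. w x e) - (\<Sum>e\<in>units. w x e * hh w U x (x + e))"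
    unfolding SS_def by (simp add: algebra_simps sum_subtractf)
  also have "\<dots> = 1 - (\<Sum>y\<in>U. qstep w x y * hh w U x y)"
    using sx assms hh_out by (subst reindex_units) (auto simp: sx_def)
  finally have SSe: "SS w U x = 1 - (\<Sum>y\<in>U. qstep w x y * hh w U x y)" .
  show RS: "RR w U x * SS w U x = 1" unfolding SSe by (rule RR_eq[OF assms])
  have "1 \<le> RR w U x"
  proof -
    have "(\<Sum>m<1. qpath w U m x x) \<le> RR w U x" unfolding RR_def
      using qpath_summable[OF assms] qpath_nonneg[OF sx] by (intro sum_le_suminf) auto
    then show ?thesis by simp
  qed
  then show "1 \<le> RR w U x" .
  then show Sp: "0 < SS w U x" using RS by (smt (verit) zero_less_mult_iff)
  show "(\<Sum>n. qpath w U n a x) = hh w U x a / SS w U x"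
    using green_decomp[OF assms, of a] RS Sp by (simp add: field_simps)
qed


lemma meas_coord2: "i \<in> I \<Longrightarrow> j \<in> J \<Longrightarrow>
  (\<lambda>w. w i j) \<in> borel_measurable (\<Pi>\<^sub>M i\<in>I. \<Pi>\<^sub>M j\<in>J. (borel :: real measure))"
proof -
  assume i: "i \<in> I" and j: "j \<in> J"
  have a: "(\<lambda>w. w i) \<in> measurable (\<Pi>\<^sub>M i\<in>I. \<Pi>\<^sub>M j\<in>J. (borel :: real measure)) (\<Pi>\<^sub>M j\<in>J. (borel :: real measure))"
    using measurable_component_singleton[OF i, of "\<lambda>_. \<Pi>\<^sub>M j\<in>J. (borel :: real measure)"] .
  have b: "(\<lambda>v. v j) \<in> measurable (\<Pi>\<^sub>M j\<in>J. (borel :: real measure)) borel"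
    using measurable_component_singleton[OF j, of "\<lambda>_. (borel :: real measure)"] .
  show ?thesis using measurable_compose[OF a b] .
qed

lemma meas_coord: "(\<lambda>w. w z e) \<in> borel_measurable (Omega_M :: 'd::finite env measure)"
  unfolding Omega_M_def by (rule meas_coord2) auto

lemma space_Omega: "space (Omega_M :: 'd::finite env measure) = UNIV"
  unfolding Omega_M_def by (simp add: space_PiM PiE_def extensional_def)

lemma meas_shift: "shift y \<in> measurable (Omega_M :: 'd::finite env measure) Omega_M"
proof -
  have "(\<lambda>w z. w (z + y)) \<in> measurable (Omega_M :: 'd::finite env measure)
          (\<Pi>\<^sub>M z\<in>UNIV. \<Pi>\<^sub>M e\<in>UNIV. borel)"
    unfolding Omega_M_def
    by (rule measurable_PiM_single') (auto intro: measurable_component_singleton simp: space_PiM)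
  then show ?thesis unfolding shift_def Omega_M_def .
qed

lemma meas_restrict: "(\<lambda>w. restrict w L) \<in> measurable (Omega_M :: 'd::finite env measure) (\<Pi>\<^sub>M z\<in>L. \<Pi>\<^sub>M e\<in>UNIV. borel)"
  unfolding Omega_M_def by (rule measurable_restrict_subset) simp

lemma meas_restrict_F: "(\<lambda>w. restrict w L) \<in> measurable (Fsig L :: 'd::finite env measure) (\<Pi>\<^sub>M z\<in>L. \<Pi>\<^sub>M e\<in>UNIV. borel)"
  unfolding Fsig_def using measurable_space[OF meas_restrict]
  by (intro measurable_vimage_algebra1) auto

lemma meas_coord_F:
  assumes "z \<in> L"
  shows "(\<lambda>w. w z e) \<in> borel_measurable (Fsig L :: 'd::finite env measure)"
proof -
  have "(\<lambda>r::'d env. r z e) \<in> borel_measurable (\<Pi>\<^sub>M z\<in>L. \<Pi>\<^sub>M e\<in>(UNIV::'d site set). borel)"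
    by (rule meas_coord2[OF assms UNIV_I])
  from measurable_comp[OF meas_restrict_F this] show ?thesis using assms by (simp add: o_def)
qed

lemma space_Fsig: "space (Fsig L) = space Omega_M"
  unfolding Fsig_def by simp

lemma sets_Fsig_sub: "sets (Fsig L) \<subseteq> sets (Omega_M :: 'd::finite env measure)"
  unfolding Fsig_def by (rule sets_image_in_sets[OF refl meas_restrict])

lemma sets_Fsig_mono:
  assumes "L' \<subseteq> L"
  shows "sets (Fsig L') \<subseteq> sets (Fsig L :: 'd::finite env measure)"
proof -
  have "(\<lambda>w. restrict (restrict w L) L') \<in> measurable (Fsig L) (\<Pi>\<^sub>M z\<in>L'. \<Pi>\<^sub>M e\<in>(UNIV::'d site set). borel)"
    by (rule measurable_comp[OF meas_restrict_F measurable_restrict_subset[OF assms], unfolded o_def])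
  moreover have "restrict (restrict w L) L' = restrict w L'" for w :: "'d env"
    using assms by (auto simp: restrict_def fun_eq_iff)
  ultimately have "(\<lambda>w. restrict w L') \<in> measurable (Fsig L) (\<Pi>\<^sub>M z\<in>L'. \<Pi>\<^sub>M e\<in>(UNIV::'d site set). borel)"
    by simp
  then show ?thesis unfolding Fsig_def[of L'] by (intro sets_image_in_sets) (auto simp: space_Fsig)
qed

lemma qpath_meas:
  assumes "\<And>z e. z \<in> L \<Longrightarrow> (\<lambda>w. w z e) \<in> borel_measurable M" "V \<subseteq> L"
  shows "(\<lambda>w. qpath w V n a b) \<in> borel_measurable M"
proof (induction n arbitrary: b)
  case 0 then show ?case by simp
next
  case (Suc n)
  have q: "(\<lambda>w. qstep w y b) \<in> borel_measurable M" if "y \<in> V" for y b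
    unfolding qstep_def using assms that by auto
  show ?case unfolding qpS using Suc q by (intro borel_measurable_sum borel_measurable_times) auto
qed


lemma stat_transfer:
  fixes P :: "'d::finite env measure"
  assumes sets_P: "sets P = sets Omega_M" and stat: "stationary P"
    and Qm: "{w \<in> space Omega_M. Q w} \<in> sets Omega_M"
    and ae: "AE w in P. Q w"
  shows "AE w in P. Q (shift z w)"
proof -
  have m: "shift z \<in> measurable P Omega_M"
    using meas_shift measurable_cong_sets[OF sets_P refl] by blast
  have "AE w in distr P Omega_M (shift z). Q w" using stat ae unfolding stationary_def by metis
  then show ?thesis using AE_distr_iff[OF m Qm] by simp
qed

lemma pred_units_pos: "{w \<in> space Omega_M. \<forall>e\<in>units. 0 < w (0::'d::finite site) e} \<in> sets Omega_M"
  using meas_coord by (intro sets.sets_Collect_finite_All finite_units) (auto simp: borel_measurable_iff_greater)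

lemma pred_edirs: "{w \<in> space Omega_M. \<forall>e\<in>Edirs l. \<kappa> \<le> w (0::'d::finite site) e} \<in> sets Omega_M"
  using meas_coord finite_subset[OF Edirs_sub finite_units]
  by (intro sets.sets_Collect_finite_All) (auto simp: borel_measurable_iff_ge)

context sigma_finite_subalgebra
begin

lemma cond_exp_nonneg_from_int:
  assumes Z: "integrable M Z"
    and int: "\<And>B. B \<in> sets F \<Longrightarrow> 0 \<le> (\<integral>w. indicator B w * Z w \<partial>M)"
  shows "AE w in M. 0 \<le> real_cond_exp M F Z w"
proof -
  let ?E = "real_cond_exp M F Z"
  define B where "B = {w \<in> space M. ?E w < 0}"
  have BF: "B \<in> sets F"
  proof -
    have "B = {w \<in> space F. ?E w < 0}" using subalg by (simp add: B_def subalgebra_def)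
    then show ?thesis by simp
  qed
  have iB: "indicator B \<in> borel_measurable F" using BF by simp
  have intBZ: "integrable M (\<lambda>w. indicator B w * Z w)"
    using BF subalg Z integrable_real_mult_indicator[of B M Z] by (auto simp: subalgebra_def mult.commute)
  have i1: "integrable M (\<lambda>w. indicator B w * ?E w)"
    and e1: "(\<integral>w. indicator B w * ?E w \<partial>M) = (\<integral>w. indicator B w * Z w \<partial>M)"
    using real_cond_exp_intg[OF intBZ iB] Z by (auto simp: borel_measurable_integrable)
  have "0 \<le> (\<integral>w. - (indicator B w * ?E w) \<partial>M)"
    by (rule integral_nonneg_AE) (auto simp: B_def indicator_def)
  moreover have "(\<integral>w. - (indicator B w * ?E w) \<partial>M) \<le> 0" using e1 int[OF BF] by simp
  ultimately have "(\<integral>w. - (indicator B w * ?E w) \<partial>M) = 0" by linarith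
  then have "AE w in M. - (indicator B w * ?E w) = 0"
    using integral_nonneg_eq_0_iff_AE[of M "\<lambda>w. - (indicator B w * ?E w)"] i1
    by (auto simp: B_def indicator_def)
  from this AE_space show ?thesis
    by eventually_elim (auto simp: B_def indicator_def split: if_splits)
qed

lemma cond_exp_pos:
  assumes Z: "integrable M Z" and pos: "AE w in M. 0 < Z w"
  shows "AE w in M. 0 < real_cond_exp M F Z w"
proof -
  let ?E = "real_cond_exp M F Z"
  define B where "B = {w \<in> space M. ?E w \<le> 0}"
  have BF: "B \<in> sets F"
  proof -
    have "B = {w \<in> space F. ?E w \<le> 0}" using subalg by (simp add: B_def subalgebra_def)
    then show ?thesis by simp
  qed
  have iB: "indicator B \<in> borel_measurable F" using BF by simp
  have intBZ: "integrable M (\<lambda>w. indicator B w * Z w)"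
    using BF subalg Z integrable_real_mult_indicator[of B M Z] by (auto simp: subalgebra_def mult.commute)
  have e1: "(\<integral>w. indicator B w * ?E w \<partial>M) = (\<integral>w. indicator B w * Z w \<partial>M)"
    using real_cond_exp_intg[OF intBZ iB] Z by (auto simp: borel_measurable_integrable)
  have "0 \<le> (\<integral>w. - (indicator B w * ?E w) \<partial>M)"
    by (rule integral_nonneg_AE) (auto simp: B_def indicator_def)
  then have "(\<integral>w. indicator B w * ?E w \<partial>M) \<le> 0" by simp
  moreover have "0 \<le> (\<integral>w. indicator B w * Z w \<partial>M)"
    using pos by (intro integral_nonneg_AE) (auto elim!: eventually_mono simp: indicator_def)
  ultimately have "(\<integral>w. indicator B w * Z w \<partial>M) = 0" using e1 by linarith
  moreover have nn: "AE w in M. 0 \<le> indicator B w * Z w"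
    using pos by (auto elim!: eventually_mono simp: indicator_def)
  ultimately have "AE w in M. indicator B w * Z w = 0"
    using integral_nonneg_eq_0_iff_AE[OF intBZ nn] by simp
  from this pos AE_space show ?thesis
    by eventually_elim (auto simp: B_def indicator_def split: if_splits)
qed

end

definition rn :: "nat \<Rightarrow> real \<Rightarrow> real" where
  "rn n t = max (1 / real n) (min 1 ((of_int \<lfloor>real n * t\<rfloor> + 1) / real n))"

lemma rn_meas[measurable]: "rn n \<in> borel_measurable borel"
  unfolding rn_def by measurable

lemma rn_bounds:
  assumes "n \<ge> 1" "0 \<le> t" "t \<le> 1"
  shows "t \<le> rn n t" "rn n t \<le> t + 1 / real n"
proof -
  have np: "real n > 0" using assms by simp
  have "real n * t < of_int \<lfloor>real n * t\<rfloor> + 1" by linarith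
  then have "t < (of_int \<lfloor>real n * t\<rfloor> + 1) / real n" using np by (simp add: field_simps)
  then show "t \<le> rn n t" using assms unfolding rn_def by auto
  have "of_int \<lfloor>real n * t\<rfloor> \<le> real n * t" by simp
  then have "(of_int \<lfloor>real n * t\<rfloor> + 1) / real n \<le> t + 1 / real n" using np by (simp add: field_simps)
  then show "rn n t \<le> t + 1 / real n" using assms np unfolding rn_def by auto
qed

lemma rn_range:
  assumes "n \<ge> 1"
  shows "0 < rn n t" "rn n t \<le> 1" "rn n t \<in> (\<lambda>k. real k / real n) ` {1..n}"
proof -
  have np: "real n > 0" using assms by simp
  show "0 < rn n t" using np unfolding rn_def by (simp add: less_max_iff_disj)
  show "rn n t \<le> 1" using assms unfolding rn_def by auto
  define k where "k = max 1 (min (int n) (\<lfloor>real n * t\<rfloor> + 1))"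
  have "rn n t = real_of_int k / real n"
    unfolding rn_def k_def using np
    by (simp add: max_divide_distrib_right min_divide_distrib_right of_int_max of_int_min)
  moreover have "1 \<le> k" "k \<le> int n" using assms by (auto simp: k_def)
  ultimately have "rn n t = real (nat k) / real n" "nat k \<in> {1..n}" by auto
  then show "rn n t \<in> (\<lambda>k. real k / real n) ` {1..n}" by blast
qed


lemma rn_lim:
  assumes "0 \<le> t" "t \<le> 1"
  shows "(\<lambda>k. rn (Suc k) t) \<longlonglongrightarrow> t"
proof (rule real_tendsto_sandwich)
  show "\<forall>\<^sub>F k in sequentially. t \<le> rn (Suc k) t" using rn_bounds(1)[OF _ assms] by simp
  show "\<forall>\<^sub>F k in sequentially. rn (Suc k) t \<le> t + inverse (real (Suc k))"
  proof (intro always_eventually allI)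
    fix k show "rn (Suc k) t \<le> t + inverse (real (Suc k))"
      using rn_bounds(2)[OF _ assms, of "Suc k"] by (simp add: divide_inverse)
  qed
  show "(\<lambda>k. t) \<longlonglongrightarrow> t" by simp
  show "(\<lambda>k. t + inverse (real (Suc k))) \<longlonglongrightarrow> t"
    using tendsto_add[OF tendsto_const LIMSEQ_inverse_real_of_nat, of t] by simp
qed

definition Sq :: "'d::finite site \<Rightarrow> ('d site \<Rightarrow> real) \<Rightarrow> 'd env \<Rightarrow> real" where
  "Sq x q w = (\<Sum>e\<in>units. q e * w x e)"

definition L1 :: "'d::finite site \<Rightarrow> real" where
  "L1 l = (\<Sum>e\<in>units. \<bar>real_of_int (dotZ e l)\<bar>)"

lemma drift_bound:
  assumes "sx w"
  shows "\<bar>drift_dot l x w\<bar> \<le> L1 l"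
proof -
  have "\<bar>drift_dot l x w\<bar> \<le> (\<Sum>e\<in>units. \<bar>real_of_int (dotZ e l) * w x e\<bar>)"
    unfolding drift_dot_def by (rule sum_abs)
  also have "\<dots> \<le> (\<Sum>e\<in>units. \<bar>real_of_int (dotZ e l)\<bar>)"
  proof (intro sum_mono)
    fix e :: "'a site" assume e: "e \<in> units"
    have "0 \<le> w x e" using assms e by (auto simp: sx_def)
    moreover have "w x e \<le> 1"
    proof -
      have "w x e \<le> (\<Sum>e\<in>units. w x e)" using assms e by (intro member_le_sum) (auto simp: sx_def)
      then show ?thesis using assms by (simp add: sx_def)
    qed
    ultimately show "\<bar>real_of_int (dotZ e l) * w x e\<bar> \<le> \<bar>real_of_int (dotZ e l)\<bar>"
      by (simp add: abs_mult mult_left_le)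
  qed
  finally show ?thesis unfolding L1_def .
qed

lemma units_ne: "(units :: 'd::finite site set) \<noteq> {}"
  unfolding units_def by auto

lemma Sq_bounds:
  assumes "sx w" "\<forall>e\<in>units. 0 < q e \<and> q e \<le> 1"
  shows "Min (q ` units) \<le> Sq x q w" "Sq x q w \<le> 1" "0 < Min (q ` units)"
proof -
  have wn: "\<forall>e\<in>units. 0 \<le> w x e" and ws: "(\<Sum>e\<in>units. w x e) = 1" using assms by (auto simp: sx_def)
  show "0 < Min (q ` units)" using assms units_ne by (subst Min_gr_iff) auto
  have "Min (q ` units) = (\<Sum>e\<in>units. Min (q ` units) * w x e)" by (simp add: sum_distrib_left[symmetric] ws)
  also have "\<dots> \<le> Sq x q w" unfolding Sq_def using wn by (intro sum_mono mult_right_mono) auto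
  finally show "Min (q ` units) \<le> Sq x q w" .
  have "Sq x q w \<le> (\<Sum>e\<in>units. 1 * w x e)" unfolding Sq_def using wn assms by (intro sum_mono mult_right_mono) auto
  then show "Sq x q w \<le> 1" using ws by simp
qed

locale kal =
  fixes P :: "'d::finite env measure" and l :: "'d site" and \<kappa> \<delta> :: real and es :: "'d site"
  assumes prob: "prob_space P" and sets_P: "sets P = sets Omega_M"
    and sxAE: "AE w in P. sx w"
    and posAE: "AE w in P. \<forall>z. \<forall>e\<in>units. 0 < w z e"
    and kapAE: "AE w in P. \<forall>z. \<kappa> \<le> w z es"
    and es: "es \<in> units" and kp: "0 < \<kappa>" and dp: "0 < \<delta>"
    and hyp: "\<And>x f. (\<forall>e\<in>units. 0 < f e \<and> f e \<le> (1::real)) \<Longrightarrow>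
       AE w in P.
         inverse (real_cond_exp P (Fsig (- {x}))
                    (\<lambda>w'. 1 / (\<Sum>e\<in>units. f e * w' x e)) w)
         * real_cond_exp P (Fsig (- {x}))
                    (\<lambda>w'. drift_dot l x w' / (\<Sum>e\<in>units. f e * w' x e)) w
         \<ge> \<delta>"
begin

interpretation prob_space P by (rule prob)

lemma gdAE: "AE w in P. gd w es \<kappa>"
  using sxAE kapAE by eventually_elim (auto simp: gd_def es kp)

lemma mP: "f \<in> borel_measurable Omega_M \<Longrightarrow> f \<in> borel_measurable P"
  using measurable_cong_sets[OF sets_P refl] by blast

lemma space_P: "space P = UNIV"
  using sets_eq_imp_space_eq[OF sets_P] space_Omega by simp

lemma subalg_F: "subalgebra P (Fsig L)"
  unfolding subalgebra_def using sets_Fsig_sub[of L] sets_P space_Fsig[of L] space_P space_Omega by auto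

lemma sfs: "sigma_finite_subalgebra P (Fsig L)"
proof -
  interpret finite_measure_subalgebra P "Fsig L"
    by unfold_locales (rule subalg_F)
  show ?thesis by unfold_locales
qed

lemma coordP[measurable]: "(\<lambda>w. w z e) \<in> borel_measurable P"
  by (rule mP[OF meas_coord])

lemma qpath_measP: "(\<lambda>w. qpath w V n a b) \<in> borel_measurable P"
  by (rule qpath_meas[of UNIV]) (auto intro: coordP)

lemma green_measP: "(\<lambda>w. green w U x) \<in> borel_measurable P"
  unfolding green_def by (intro borel_measurable_suminf qpath_measP)

lemma hh_measF: "(\<lambda>w. hh w U x y) \<in> borel_measurable (Fsig (- {x}))"
  unfolding hh_def by (intro borel_measurable_suminf qpath_meas[of "- {x}"] meas_coord_F) auto

lemma hh_measP: "(\<lambda>w. hh w U x y) \<in> borel_measurable P"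
  unfolding hh_def by (intro borel_measurable_suminf qpath_measP)

lemma drift_measP: "(\<lambda>w. drift_dot l x w) \<in> borel_measurable P"
  unfolding drift_dot_def by (intro borel_measurable_sum borel_measurable_times) (auto intro: coordP)

lemma Sq_measP: "(\<lambda>w. Sq x (q w) w) \<in> borel_measurable P"
  if "\<And>e. (\<lambda>w. q w e) \<in> borel_measurable P"
  unfolding Sq_def using that by (intro borel_measurable_sum borel_measurable_times) (auto intro: coordP)

lemma pw:
  assumes "gd w es \<kappa>" "finite U" "x \<in> U"
  shows "green w U x = hh w U x 0 / SS w U x" "0 < SS w U x" "0 \<le> hh w U x 0" "hh w U x 0 \<le> 1"
    "0 \<le> green w U x" "green w U x \<le> real (card U) / \<kappa> ^ card U"
    "0 \<le> 1 - hh w U x y" "1 - hh w U x y \<le> 1"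
    "SS w U x = Sq x (\<lambda>e. 1 - hh w U x (x + e)) w"
proof -
  have sx: "sx w" using assms by (simp add: gd_def)
  show "green w U x = hh w U x 0 / SS w U x" unfolding green_def by (rule SS_eq(4)[OF assms])
  show "0 < SS w U x" by (rule SS_eq(2)[OF assms])
  show "0 \<le> hh w U x 0" "hh w U x 0 \<le> 1" "0 \<le> 1 - hh w U x y" "1 - hh w U x y \<le> 1"
    using hh_props[OF sx assms(2)] by auto
  show "0 \<le> green w U x" "green w U x \<le> real (card U) / \<kappa> ^ card U"
    unfolding green_def using qpath_summable[OF assms] by auto
  show "SS w U x = Sq x (\<lambda>e. 1 - hh w U x (x + e)) w" by (simp add: SS_def Sq_def)
qed

lemma green_pos:
  assumes "gd w es \<kappa>" "\<forall>z. \<forall>e\<in>units. 0 < w z e" "finite U" "nn_connected U" "0 \<in> U" "x \<in> U"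
  shows "0 < green w U x"
proof -
  have sx: "sx w" using assms by (simp add: gd_def)
  have path: "(\<lambda>y z. y \<in> U \<and> z \<in> U \<and> z - y \<in> units)\<^sup>*\<^sup>* 0 x"
    using assms unfolding nn_connected_def by blast
  have "\<exists>n. 0 < qpath w U n 0 b" if "(\<lambda>y z. y \<in> U \<and> z \<in> U \<and> z - y \<in> units)\<^sup>*\<^sup>* 0 b" for b
    using that
  proof (induction rule: rtranclp_induct)
    case base show ?case by (rule exI[of _ 0]) simp
  next
    case (step b c)
    then obtain n where n: "0 < qpath w U n 0 b" by blast
    have "0 < qpath w U n 0 b * qstep w b c"
      using n step(2) assms(2) by (simp add: qstep_def)
    also have "\<dots> \<le> (\<Sum>y\<in>U. qpath w U n 0 y * qstep w y c)"
      using step(2) assms(3) sx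
      by (intro member_le_sum[where f="\<lambda>y. qpath w U n 0 y * qstep w y c"] mult_nonneg_nonneg qpath_nonneg qstep_nonneg) auto
    finally show ?case by (intro exI[of _ "Suc n"]) (simp add: qpS)
  qed
  then obtain n where n: "0 < qpath w U n 0 x" using path by blast
  have "qpath w U n 0 x \<le> (\<Sum>n. qpath w U n 0 x)"
    using sum_le_suminf[OF qpath_summable(1)[OF assms(1,3,6)], of "{n}"] qpath_nonneg[OF sx] by auto
  then show ?thesis using n unfolding green_def by simp
qed

lemma key_q:
  assumes q: "\<forall>e\<in>units. 0 < q e \<and> q e \<le> 1"
  shows "AE w in P. 0 \<le> real_cond_exp P (Fsig (- {x})) (\<lambda>w. (drift_dot l x w - \<delta>) / Sq x q w) w"
proof -
  interpret sigma_finite_subalgebra P "Fsig (- {x})" by (rule sfs)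
  let ?m = "Min (q ` units)"
  have m0: "0 < ?m" using q units_ne by (subst Min_gr_iff) auto
  have bnd: "AE w in P. ?m \<le> Sq x q w \<and> Sq x q w \<le> 1 \<and> \<bar>drift_dot l x w\<bar> \<le> L1 l"
    using sxAE by eventually_elim (simp add: Sq_bounds[OF _ q] drift_bound)
  have mS[measurable]: "(\<lambda>w. Sq x q w) \<in> borel_measurable P" by (rule Sq_measP) simp
  have mD[measurable]: "(\<lambda>w. drift_dot l x w) \<in> borel_measurable P" by (rule drift_measP)
  have int1: "integrable P (\<lambda>w. 1 / Sq x q w)"
  proof (rule integrable_const_bound[where B="1 / ?m"])
    show "AE w in P. norm (1 / Sq x q w) \<le> 1 / ?m"
      using bnd
    proof eventually_elim
      case (elim w)
      then have Sp: "0 < Sq x q w" using m0 by linarith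
      then have "norm (1 / Sq x q w) = 1 / Sq x q w" by simp
      also have "\<dots> \<le> 1 / ?m" using elim m0 Sp by (intro divide_left_mono) auto
      finally show ?case .
    qed
  qed simp
  have int2: "integrable P (\<lambda>w. drift_dot l x w / Sq x q w)"
  proof (rule integrable_const_bound[where B="L1 l / ?m"])
    show "AE w in P. norm (drift_dot l x w / Sq x q w) \<le> L1 l / ?m"
      using bnd
    proof eventually_elim
      case (elim w)
      then have Sp: "0 < Sq x q w" using m0 by linarith
      have L0: "0 \<le> L1 l" using elim by linarith
      have "\<bar>drift_dot l x w / Sq x q w\<bar> = \<bar>drift_dot l x w\<bar> / Sq x q w" using Sp by (simp add: abs_divide)
      also have "\<dots> \<le> L1 l / Sq x q w" using elim Sp by (intro divide_right_mono) auto
      also have "\<dots> \<le> L1 l / ?m" using elim m0 Sp L0 by (intro divide_left_mono) auto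
      finally show ?case by simp
    qed
  qed simp
  have Y1: "AE w in P. 1 \<le> real_cond_exp P (Fsig (- {x})) (\<lambda>w. 1 / Sq x q w) w"
  proof (intro real_cond_exp_ge_c int1)
    show "AE w in P. 1 \<le> 1 / Sq x q w"
      using bnd
    proof eventually_elim
      case (elim w)
      then have Sp: "0 < Sq x q w" using m0 by linarith
      then show ?case using elim by (simp add: le_divide_eq_1)
    qed
  qed
  have H: "AE w in P. \<delta> \<le> inverse (real_cond_exp P (Fsig (- {x})) (\<lambda>w. 1 / Sq x q w) w)
            * real_cond_exp P (Fsig (- {x})) (\<lambda>w. drift_dot l x w / Sq x q w) w"
    using hyp[OF q, of x] unfolding Sq_def by simp
  have cm: "AE w in P. real_cond_exp P (Fsig (- {x})) (\<lambda>w. \<delta> * (1 / Sq x q w)) w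
              = \<delta> * real_cond_exp P (Fsig (- {x})) (\<lambda>w. 1 / Sq x q w) w"
    by (rule real_cond_exp_cmult[OF int1])
  have df: "AE w in P. real_cond_exp P (Fsig (- {x})) (\<lambda>w. drift_dot l x w / Sq x q w - \<delta> * (1 / Sq x q w)) w
      = real_cond_exp P (Fsig (- {x})) (\<lambda>w. drift_dot l x w / Sq x q w) w
        - real_cond_exp P (Fsig (- {x})) (\<lambda>w. \<delta> * (1 / Sq x q w)) w"
    by (intro real_cond_exp_diff int2 integrable_mult_right int1)
  have fe: "(\<lambda>w. (drift_dot l x w - \<delta>) / Sq x q w) = (\<lambda>w. drift_dot l x w / Sq x q w - \<delta> * (1 / Sq x q w))"
    by (simp add: diff_divide_distrib)
  show ?thesis unfolding fe using Y1 H cm df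
  proof eventually_elim
    case (elim w)
    let ?a = "real_cond_exp P (Fsig (- {x})) (\<lambda>w. 1 / Sq x q w) w"
    let ?b = "real_cond_exp P (Fsig (- {x})) (\<lambda>w. drift_dot l x w / Sq x q w) w"
    have "\<delta> * ?a \<le> inverse ?a * ?b * ?a" using elim by (intro mult_right_mono) auto
    also have "\<dots> = ?b" using elim by (simp add: field_simps)
    finally show ?case using elim by simp
  qed
qed

lemma key_C:
  assumes q: "\<forall>e\<in>units. 0 < q e \<and> q e \<le> 1" and C: "C \<in> sets (Fsig (- {x}))"
    and U: "finite U"
  shows "integrable P (\<lambda>w. indicator C w * hh w U x 0 * ((drift_dot l x w - \<delta>) / Sq x q w))"
    "0 \<le> (\<integral>w. indicator C w * hh w U x 0 * ((drift_dot l x w - \<delta>) / Sq x q w) \<partial>P)"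
proof -
  interpret sigma_finite_subalgebra P "Fsig (- {x})" by (rule sfs)
  let ?m = "Min (q ` units)"
  let ?g = "\<lambda>w. (drift_dot l x w - \<delta>) / Sq x q w"
  let ?f = "\<lambda>w. indicator C w * hh w U x 0"
  have m0: "0 < ?m" using q units_ne by (subst Min_gr_iff) auto
  have bnd: "AE w in P. ?m \<le> Sq x q w \<and> Sq x q w \<le> 1 \<and> \<bar>drift_dot l x w\<bar> \<le> L1 l
      \<and> 0 \<le> hh w U x 0 \<and> hh w U x 0 \<le> 1"
    using sxAE by eventually_elim (simp add: Sq_bounds[OF _ q] drift_bound hh_props[OF _ U])
  have mS[measurable]: "(\<lambda>w. Sq x q w) \<in> borel_measurable P" by (rule Sq_measP) simp
  have mD[measurable]: "(\<lambda>w. drift_dot l x w) \<in> borel_measurable P" by (rule drift_measP)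
  have CP: "C \<in> sets P" using C subalg_F[of "- {x}"] by (auto simp: subalgebra_def)
  have fF: "?f \<in> borel_measurable (Fsig (- {x}))"
    using C hh_measF by (intro borel_measurable_times) auto
  have fP: "?f \<in> borel_measurable P"
    using CP hh_measP by (intro borel_measurable_times) auto
  have gP: "?g \<in> borel_measurable P" by measurable
  show int: "integrable P (\<lambda>w. indicator C w * hh w U x 0 * ((drift_dot l x w - \<delta>) / Sq x q w))"
  proof (rule integrable_const_bound[where B="(L1 l + \<delta>) / ?m"])
    show "AE w in P. norm (indicator C w * hh w U x 0 * ((drift_dot l x w - \<delta>) / Sq x q w)) \<le> (L1 l + \<delta>) / ?m"
      using bnd
    proof eventually_elim
      case (elim w)
      then have Sp: "0 < Sq x q w" using m0 by linarith
      have "\<bar>indicator C w * hh w U x 0\<bar> \<le> 1" using elim by (auto simp: indicator_def)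
      moreover have "\<bar>(drift_dot l x w - \<delta>) / Sq x q w\<bar> \<le> (L1 l + \<delta>) / ?m"
      proof -
        have L0: "0 \<le> L1 l + \<delta>" using elim dp by linarith
        have "\<bar>(drift_dot l x w - \<delta>) / Sq x q w\<bar> = \<bar>drift_dot l x w - \<delta>\<bar> / Sq x q w" using Sp by (simp add: abs_divide)
        also have "\<dots> \<le> (L1 l + \<delta>) / Sq x q w" using elim Sp dp by (intro divide_right_mono) auto
        also have "\<dots> \<le> (L1 l + \<delta>) / ?m" using elim m0 Sp L0 by (intro divide_left_mono) auto
        finally show ?thesis .
      qed
      ultimately have "\<bar>indicator C w * hh w U x 0\<bar> * \<bar>(drift_dot l x w - \<delta>) / Sq x q w\<bar> \<le> 1 * ((L1 l + \<delta>) / ?m)"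
        by (intro mult_mono) auto
      then show ?case by (simp add: abs_mult)
    qed
    show "(\<lambda>w. indicator C w * hh w U x 0 * ((drift_dot l x w - \<delta>) / Sq x q w)) \<in> borel_measurable P"
      by (rule borel_measurable_times[OF fP gP])
  qed
  have "(\<integral>w. ?f w * real_cond_exp P (Fsig (- {x})) ?g w \<partial>P) = (\<integral>w. ?f w * ?g w \<partial>P)"
    using int by (intro real_cond_exp_intg(2) fF gP) simp
  moreover have "0 \<le> (\<integral>w. ?f w * real_cond_exp P (Fsig (- {x})) ?g w \<partial>P)"
    using bnd key_q[OF q, of x]
  proof (intro integral_nonneg_AE, eventually_elim)
    case (elim w) then show ?case by (auto intro!: mult_nonneg_nonneg simp: indicator_def)
  qed
  ultimately show "0 \<le> (\<integral>w. indicator C w * hh w U x 0 * ((drift_dot l x w - \<delta>) / Sq x q w) \<partial>P)"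
    by simp
qed

end


definition fv :: "'d::finite site set \<Rightarrow> 'd site \<Rightarrow> 'd env \<Rightarrow> 'd site \<Rightarrow> real" where
  "fv U x w e = 1 - hh w U x (x + e)"

definition fnn :: "nat \<Rightarrow> 'd::finite site set \<Rightarrow> 'd site \<Rightarrow> 'd env \<Rightarrow> 'd site \<Rightarrow> real" where
  "fnn n U x w = restrict (\<lambda>e. rn n (fv U x w e)) units"

definition Qn :: "nat \<Rightarrow> ('d::finite site \<Rightarrow> real) set" where
  "Qn n = PiE units (\<lambda>_. (\<lambda>k. real k / real n) ` {1..n})"

lemma finite_Qn: "finite (Qn n)"
  unfolding Qn_def by (intro finite_PiE) auto

lemma fnn_Qn: "n \<ge> 1 \<Longrightarrow> fnn n U x w \<in> Qn n"
  unfolding fnn_def Qn_def using rn_range(3) by auto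

lemma Qn_range: "n \<ge> 1 \<Longrightarrow> q \<in> Qn n \<Longrightarrow> \<forall>e\<in>units. 0 < q e \<and> q e \<le> 1"
  unfolding Qn_def by (auto simp: PiE_iff)

context kal
begin

lemma fv_measF: "(\<lambda>w. fv U x w e) \<in> borel_measurable (Fsig (- {x}))"
  unfolding fv_def using hh_measF by (intro borel_measurable_diff) auto

lemma fv_measP: "(\<lambda>w. fv U x w e) \<in> borel_measurable P"
  unfolding fv_def using hh_measP by (intro borel_measurable_diff) auto

lemma fnn_measP: "(\<lambda>w. fnn n U x w e) \<in> borel_measurable P"
  unfolding fnn_def restrict_def
  by (cases "e \<in> units") (auto intro: measurable_compose[OF fv_measP rn_meas])

lemma fnn_set:
  assumes "q \<in> Qn n"
  shows "{w. fnn n U x w = q} \<in> sets (Fsig (- {x}))"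
proof -
  have "{w. fnn n U x w = q} = {w \<in> space (Fsig (- {x})). \<forall>e\<in>units. rn n (fv U x w e) = q e}"
    using assms unfolding fnn_def Qn_def space_Fsig space_Omega
    by (auto simp: PiE_iff extensional_def fun_eq_iff)
  also have "\<dots> \<in> sets (Fsig (- {x}))"
  proof (intro sets.sets_Collect_finite_All finite_units)
    fix e
    have "(\<lambda>w. rn n (fv U x w e)) \<in> borel_measurable (Fsig (- {x}))"
      by (rule measurable_compose[OF fv_measF rn_meas])
    from borel_measurable_vimage[OF this, of "q e"]
    show "{w \<in> space (Fsig (- {x})). rn n (fv U x w e) = q e} \<in> sets (Fsig (- {x}))"
      by (simp add: vimage_def Int_def conj_commute)
  qed
  finally show ?thesis .
qed

lemma key_n:
  assumes n: "n \<ge> 1" and C: "C \<in> sets (Fsig (- {x}))" and U: "finite U"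
  shows "0 \<le> (\<integral>w. indicator C w * hh w U x 0 * ((drift_dot l x w - \<delta>) / Sq x (fnn n U x w) w) \<partial>P)"
proof -
  let ?Z = "\<lambda>q w. indicator (C \<inter> {w. fnn n U x w = q}) w * hh w U x 0 * ((drift_dot l x w - \<delta>) / Sq x q w)"
  have CQ: "C \<inter> {w. fnn n U x w = q} \<in> sets (Fsig (- {x}))" if "q \<in> Qn n" for q
    using C fnn_set[OF that] by auto
  have eq: "indicator C w * hh w U x 0 * ((drift_dot l x w - \<delta>) / Sq x (fnn n U x w) w)
      = (\<Sum>q\<in>Qn n. ?Z q w)" for w
  proof -
    have "(\<Sum>q\<in>Qn n. ?Z q w) = (\<Sum>q\<in>Qn n. if fnn n U x w = q then
         indicator C w * hh w U x 0 * ((drift_dot l x w - \<delta>) / Sq x q w) else 0)"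
      by (intro sum.cong refl) (auto simp: indicator_def)
    also have "\<dots> = indicator C w * hh w U x 0 * ((drift_dot l x w - \<delta>) / Sq x (fnn n U x w) w)"
      by (subst sum.delta'[OF finite_Qn]) (simp add: fnn_Qn[OF n])
    finally show ?thesis by simp
  qed
  have "(\<integral>w. indicator C w * hh w U x 0 * ((drift_dot l x w - \<delta>) / Sq x (fnn n U x w) w) \<partial>P)
      = (\<integral>w. (\<Sum>q\<in>Qn n. ?Z q w) \<partial>P)" unfolding eq ..
  also have "\<dots> = (\<Sum>q\<in>Qn n. (\<integral>w. ?Z q w \<partial>P))"
    by (rule Bochner_Integration.integral_sum) (rule key_C(1)[OF Qn_range[OF n] CQ U])
  also have "0 \<le> \<dots>"
    by (intro sum_nonneg key_C(2)[OF Qn_range[OF n] CQ U])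
  finally show ?thesis by simp
qed

lemma Sq_fnn_ge:
  assumes "gd w es \<kappa>" "finite U" "x \<in> U" "n \<ge> 1"
  shows "SS w U x \<le> Sq x (fnn n U x w) w"
proof -
  have sx: "sx w" using assms by (simp add: gd_def)
  have "SS w U x = (\<Sum>e\<in>units. fv U x w e * w x e)" by (simp add: SS_def fv_def)
  also have "\<dots> \<le> (\<Sum>e\<in>units. fnn n U x w e * w x e)"
  proof (intro sum_mono mult_right_mono)
    fix e :: "'d site" assume e: "e \<in> units"
    show "0 \<le> w x e" using sx e by (auto simp: sx_def)
    have "0 \<le> fv U x w e" "fv U x w e \<le> 1" unfolding fv_def using pw(7,8)[OF assms(1-3)] by auto
    then show "fv U x w e \<le> fnn n U x w e" unfolding fnn_def using e rn_bounds(1)[OF assms(4)] by simp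
  qed
  finally show ?thesis by (simp add: Sq_def)
qed

lemma Sq_fnn_lim:
  assumes "gd w es \<kappa>" "finite U" "x \<in> U"
  shows "(\<lambda>k. Sq x (fnn (Suc k) U x w) w) \<longlonglongrightarrow> SS w U x"
proof -
  have "(\<lambda>k. \<Sum>e\<in>units. fnn (Suc k) U x w e * w x e) \<longlonglongrightarrow> (\<Sum>e\<in>units. fv U x w e * w x e)"
  proof (intro tendsto_sum tendsto_mult_right)
    fix e :: "'d site" assume e: "e \<in> units"
    have "0 \<le> fv U x w e" "fv U x w e \<le> 1" unfolding fv_def using pw(7,8)[OF assms(1-3)] by auto
    then show "(\<lambda>k. fnn (Suc k) U x w e) \<longlonglongrightarrow> fv U x w e" unfolding fnn_def using e rn_lim by simp
  qed
  then show ?thesis by (simp add: Sq_def SS_def fv_def)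
qed

lemma key_lim:
  assumes C: "C \<in> sets (Fsig (- {x}))" and U: "finite U" and xU: "x \<in> U"
  shows "0 \<le> (\<integral>w. indicator C w * (green w U x * (drift_dot l x w - \<delta>)) \<partial>P)"
proof -
  interpret prob_space P by (rule prob)
  let ?s = "\<lambda>k w. indicator C w * hh w U x 0 * ((drift_dot l x w - \<delta>) / Sq x (fnn (Suc k) U x w) w)"
  let ?f = "\<lambda>w. indicator C w * hh w U x 0 * ((drift_dot l x w - \<delta>) / SS w U x)"
  let ?B = "(L1 l + \<delta>) * (real (card U) / \<kappa> ^ card U)"
  have CP: "C \<in> sets P" using C subalg_F[of "- {x}"] by (auto simp: subalgebra_def)
  have mD: "(\<lambda>w. drift_dot l x w) \<in> borel_measurable P" by (rule drift_measP)
  have mSS: "(\<lambda>w. SS w U x) \<in> borel_measurable P"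
  proof -
    have "(\<lambda>w. Sq x (fv U x w) w) \<in> borel_measurable P" by (rule Sq_measP[OF fv_measP])
    then show ?thesis by (simp add: Sq_def SS_def fv_def)
  qed
  have mf: "?f \<in> borel_measurable P"
    using CP hh_measP mD mSS by (intro borel_measurable_times borel_measurable_divide borel_measurable_diff) auto
  have ms: "?s k \<in> borel_measurable P" for k
    using CP hh_measP mD Sq_measP[OF fnn_measP]
    by (intro borel_measurable_times borel_measurable_divide borel_measurable_diff) auto
  have bnd_all: "AE w in P. gd w es \<kappa> \<and> sx w \<and> \<bar>drift_dot l x w\<bar> \<le> L1 l"
    using gdAE by eventually_elim (auto simp: gd_def drift_bound)
  have lim: "AE w in P. (\<lambda>k. ?s k w) \<longlonglongrightarrow> ?f w"
    using bnd_all
  proof eventually_elim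
    case (elim w)
    have "0 < SS w U x" using pw(2)[OF _ U xU] elim by auto
    then show ?case
      by (intro tendsto_mult_left tendsto_divide tendsto_const Sq_fnn_lim[OF _ U xU]) (use elim in auto)
  qed
  have bound: "AE w in P. norm (?s k w) \<le> ?B" for k
    using bnd_all
  proof eventually_elim
    case (elim w)
    have g: "gd w es \<kappa>" using elim by simp
    have SSp: "0 < SS w U x" using pw(2)[OF g U xU] .
    have Sk: "SS w U x \<le> Sq x (fnn (Suc k) U x w) w" using Sq_fnn_ge[OF g U xU] by simp
    have hh0: "0 \<le> hh w U x 0" using pw(3)[OF g U xU] .
    have L0: "\<bar>drift_dot l x w - \<delta>\<bar> \<le> L1 l + \<delta>" using elim dp by linarith
    have "norm (?s k w) = indicator C w * hh w U x 0 * (\<bar>drift_dot l x w - \<delta>\<bar> / Sq x (fnn (Suc k) U x w) w)"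
      using hh0 SSp Sk by (simp add: abs_mult abs_divide indicator_def)
    also have "\<dots> \<le> 1 * hh w U x 0 * ((L1 l + \<delta>) / SS w U x)"
    proof (intro mult_mono)
      show "\<bar>drift_dot l x w - \<delta>\<bar> / Sq x (fnn (Suc k) U x w) w \<le> (L1 l + \<delta>) / SS w U x"
        using L0 SSp Sk by (intro frac_le) auto
    qed (use hh0 L0 SSp Sk in \<open>auto simp: indicator_def\<close>)
    also have "\<dots> = (L1 l + \<delta>) * green w U x" using pw(1)[OF g U xU] by simp
    also have "\<dots> \<le> ?B" using pw(6)[OF g U xU] L0 by (intro mult_left_mono) auto
    finally show ?case .
  qed
  have "(\<lambda>k. \<integral>w. ?s k w \<partial>P) \<longlonglongrightarrow> (\<integral>w. ?f w \<partial>P)"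
    by (rule integral_dominated_convergence[OF mf ms _ lim bound]) simp
  moreover have "0 \<le> (\<integral>w. ?s k w \<partial>P)" for k by (rule key_n[OF _ C U]) simp
  ultimately have "0 \<le> (\<integral>w. ?f w \<partial>P)" by (intro LIMSEQ_le_const) auto
  also have "(\<integral>w. ?f w \<partial>P) = (\<integral>w. indicator C w * (green w U x * (drift_dot l x w - \<delta>)) \<partial>P)"
  proof (rule integral_cong_AE)
    show "AE w in P. ?f w = indicator C w * (green w U x * (drift_dot l x w - \<delta>))"
      using gdAE by eventually_elim (simp add: pw(1)[OF _ U xU])
    show "(\<lambda>w. indicator C w * (green w U x * (drift_dot l x w - \<delta>))) \<in> borel_measurable P"
      using CP green_measP mD by (intro borel_measurable_times borel_measurable_diff) auto
  qed (rule mf)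
  finally show ?thesis .
qed

end


context kal
begin

lemma kal_main:
  assumes U: "finite U" and conn: "nn_connected U" and U0: "0 \<in> U" and xU: "x \<in> U"
  shows "AE w in P. \<delta> \<le> kalikow_drift_dot P l U x w"
proof -
  interpret prob_space P by (rule prob)
  interpret G: sigma_finite_subalgebra P "Fsig (- U)" by (rule sfs)
  let ?E = "real_cond_exp P (Fsig (- U))"
  let ?g = "\<lambda>w. green w U x"
  let ?Bd = "real (card U) / \<kappa> ^ card U"
  have mg: "?g \<in> borel_measurable P" by (rule green_measP)
  have mD: "(\<lambda>w. drift_dot l x w) \<in> borel_measurable P" by (rule drift_measP)
  have gb: "AE w in P. 0 \<le> ?g w \<and> ?g w \<le> ?Bd \<and> sx w \<and> \<bar>drift_dot l x w\<bar> \<le> L1 l"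
    using gdAE
  proof eventually_elim
    case (elim w)
    then have "sx w" by (simp add: gd_def)
    then show ?case using pw(5)[OF elim U xU] pw(6)[OF elim U xU] drift_bound[of w l x] by auto
  qed
  have int_g: "integrable P ?g"
  proof (rule integrable_const_bound[where B="?Bd"])
    show "AE w in P. norm (?g w) \<le> ?Bd" using gb by eventually_elim auto
  qed (rule mg)
  have int_ge: "integrable P (\<lambda>w. ?g w * w x e)" if e: "e \<in> units" for e
  proof (rule integrable_const_bound[where B="?Bd"])
    show "AE w in P. norm (?g w * w x e) \<le> ?Bd"
      using gb
    proof eventually_elim
      case (elim w)
      have "0 \<le> w x e" "w x e \<le> 1"
      proof -
        show "0 \<le> w x e" using elim e by (auto simp: sx_def)
        have "w x e \<le> (\<Sum>e\<in>units. w x e)" using elim e by (intro member_le_sum) (auto simp: sx_def)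
        then show "w x e \<le> 1" using elim by (simp add: sx_def)
      qed
      then have "?g w * w x e \<le> ?Bd * 1" using elim by (intro mult_mono) auto
      then show ?case using elim \<open>0 \<le> w x e\<close> by (simp add: abs_mult)
    qed
    show "(\<lambda>w. ?g w * w x e) \<in> borel_measurable P" using mg by (intro borel_measurable_times coordP)
  qed
  have int_gD: "integrable P (\<lambda>w. ?g w * drift_dot l x w)"
  proof (rule integrable_const_bound[where B="?Bd * L1 l"])
    show "AE w in P. norm (?g w * drift_dot l x w) \<le> ?Bd * L1 l"
      using gb
    proof eventually_elim
      case (elim w)
      have "?g w * \<bar>drift_dot l x w\<bar> \<le> ?Bd * L1 l" using elim by (intro mult_mono) auto
      then show ?case using elim by (simp add: abs_mult)
    qed
  qed (use mg mD in auto)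
  have int_Z: "integrable P (\<lambda>w. ?g w * (drift_dot l x w - \<delta>))"
    using int_gD int_g by (simp add: right_diff_distrib)
  have nonneg: "AE w in P. 0 \<le> ?E (\<lambda>w. ?g w * (drift_dot l x w - \<delta>)) w"
  proof (rule G.cond_exp_nonneg_from_int[OF int_Z])
    fix B assume "B \<in> sets (Fsig (- U))"
    then have "B \<in> sets (Fsig (- {x}))" using sets_Fsig_mono[of "- U" "- {x}"] xU by auto
    then show "0 \<le> (\<integral>w. indicator B w * (?g w * (drift_dot l x w - \<delta>)) \<partial>P)"
      by (rule key_lim[OF _ U xU])
  qed
  have pos: "AE w in P. 0 < ?E ?g w"
  proof (rule G.cond_exp_pos[OF int_g])
    show "AE w in P. 0 < ?g w"
      using gdAE posAE by eventually_elim (rule green_pos[OF _ _ U conn U0 xU])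
  qed
  have diff: "AE w in P. ?E (\<lambda>w. ?g w * (drift_dot l x w - \<delta>)) w = ?E (\<lambda>w. ?g w * drift_dot l x w) w - \<delta> * ?E ?g w"
  proof -
    have fe: "(\<lambda>w. ?g w * (drift_dot l x w - \<delta>)) = (\<lambda>w. ?g w * drift_dot l x w - \<delta> * ?g w)"
      by (simp add: algebra_simps)
    have "AE w in P. ?E (\<lambda>w. ?g w * drift_dot l x w - \<delta> * ?g w) w = ?E (\<lambda>w. ?g w * drift_dot l x w) w - ?E (\<lambda>w. \<delta> * ?g w) w"
      by (intro G.real_cond_exp_diff int_gD integrable_mult_right int_g)
    moreover have "AE w in P. ?E (\<lambda>w. \<delta> * ?g w) w = \<delta> * ?E ?g w"
      by (rule G.real_cond_exp_cmult[OF int_g])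
    ultimately show ?thesis unfolding fe by eventually_elim simp
  qed
  define fi where "fi = (\<lambda>e w. if e \<in> units then real_of_int (dotZ e l) * (?g w * w x e) else 0)"
  have int_fi: "integrable P (fi e)" for e
    unfolding fi_def by (cases "e \<in> units") (auto intro: integrable_mult_right int_ge)
  have sumeq: "(\<lambda>w. ?g w * drift_dot l x w) = (\<lambda>w. \<Sum>e\<in>units. fi e w)"
    unfolding fi_def drift_dot_def by (auto simp: sum_distrib_left algebra_simps intro!: sum.cong)
  have lin1: "AE w in P. ?E (\<lambda>w. ?g w * drift_dot l x w) w = (\<Sum>e\<in>units. ?E (fi e) w)"
    unfolding sumeq by (rule G.real_cond_exp_sum[OF int_fi])
  have lin2: "AE w in P. \<forall>e\<in>units. ?E (fi e) w = real_of_int (dotZ e l) * ?E (\<lambda>w. ?g w * w x e) w"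
  proof (subst AE_ball_countable)
    show "countable units" by (rule countable_finite[OF finite_units])
    show "\<forall>e\<in>units. AE w in P. ?E (fi e) w = real_of_int (dotZ e l) * ?E (\<lambda>w. ?g w * w x e) w"
    proof
      fix e :: "'d site" assume e: "e \<in> units"
      have "fi e = (\<lambda>w. real_of_int (dotZ e l) * (?g w * w x e))" using e by (simp add: fi_def fun_eq_iff)
      then show "AE w in P. ?E (fi e) w = real_of_int (dotZ e l) * ?E (\<lambda>w. ?g w * w x e) w"
        using G.real_cond_exp_cmult[OF int_ge[OF e], of "real_of_int (dotZ e l)"] by simp
    qed
  qed
  show ?thesis using nonneg pos diff lin1 lin2
  proof eventually_elim
    case (elim w)
    have "kalikow_drift_dot P l U x w = (\<Sum>e\<in>units. real_of_int (dotZ e l) * ?E (\<lambda>w. ?g w * w x e) w) / ?E ?g w"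
      unfolding kalikow_drift_dot_def kalikowP_def by (simp add: sum_divide_distrib)
    also have "\<dots> = ?E (\<lambda>w. ?g w * drift_dot l x w) w / ?E ?g w"
      using elim by simp
    finally have kd: "kalikow_drift_dot P l U x w = ?E (\<lambda>w. ?g w * drift_dot l x w) w / ?E ?g w" .
    have "\<delta> * ?E ?g w \<le> ?E (\<lambda>w. ?g w * drift_dot l x w) w" using elim by linarith
    then show ?case unfolding kd using elim by (simp add: le_divide_eq)
  qed
qed

end


theorem lemma5p16:
  fixes P :: "'d::finite env measure" and l :: "'d site" and \<kappa> \<delta> :: real
  assumes prob: "prob_space P" and sets_P: "sets P = sets Omega_M"
    and stat: "stationary P" and erg: "ergodic P"
    and simplex: "AE w in P. \<forall>z. (\<forall>e\<in>units. 0 \<le> w z e) \<and> (\<Sum>e\<in>units. w z e) = 1"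
    and l_nz: "l \<noteq> 0"
    and A2_pos: "AE w in P. \<forall>e\<in>units. w 0 e > 0"
    and kappa_pos: "\<kappa> > 0"
    and A2_kappa: "AE w in P. \<forall>e\<in>Edirs l. w 0 e \<ge> \<kappa>"
    and delta_pos: "\<delta> > 0"
    and hyp: "\<And>x f. (\<forall>e\<in>units. 0 < f e \<and> f e \<le> (1::real)) \<Longrightarrow>
       AE w in P.
         inverse (real_cond_exp P (Fsig (- {x}))
                    (\<lambda>w'. 1 / (\<Sum>e\<in>units. f e * w' x e)) w)
         * real_cond_exp P (Fsig (- {x}))
                    (\<lambda>w'. drift_dot l x w' / (\<Sum>e\<in>units. f e * w' x e)) w
         \<ge> \<delta>"
  shows "AE w in P. \<forall>U. finite U \<and> nn_connected U \<and> 0 \<in> U \<longrightarrow>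
           (\<forall>x\<in>U. kalikow_drift_dot P l U x w \<ge> \<delta>)"
proof -
  obtain es where es: "es \<in> Edirs l" using Edirs_ne[OF l_nz] by blast
  have esu: "es \<in> units" using Edirs_sub es by blast
  have sxAE: "AE w in P. sx w" using simplex by (simp add: sx_def)
  have posAE: "AE w in P. \<forall>z. \<forall>e\<in>units. 0 < w z e"
  proof -
    have "AE w in P. \<forall>e\<in>units. 0 < w z e" for z
      using stat_transfer[OF sets_P stat pred_units_pos A2_pos, of z] by (simp add: shift_def)
    then show ?thesis by (simp add: AE_all_countable)
  qed
  have kapAE: "AE w in P. \<forall>z. \<kappa> \<le> w z es"
  proof -
    have "AE w in P. \<forall>e\<in>Edirs l. \<kappa> \<le> w z e" for z
      using stat_transfer[OF sets_P stat pred_edirs A2_kappa, of z] by (simp add: shift_def)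
    then have "AE w in P. \<forall>z. \<forall>e\<in>Edirs l. \<kappa> \<le> w z e" by (simp add: AE_all_countable)
    then show ?thesis using es by (auto elim!: eventually_mono)
  qed
  interpret K: kal P l \<kappa> \<delta> es
    by (rule kal.intro[OF prob sets_P sxAE posAE kapAE esu kappa_pos delta_pos hyp])
  have "AE w in P. \<forall>U\<in>{U. finite U}. \<forall>x\<in>U. (nn_connected U \<and> 0 \<in> U \<longrightarrow> \<delta> \<le> kalikow_drift_dot P l U x w)"
  proof (subst AE_ball_countable)
    show "countable {U :: 'd site set. finite U}" by (rule countable_Collect_finite)
    show "\<forall>U\<in>{U. finite U}. AE w in P. \<forall>x\<in>U. (nn_connected U \<and> 0 \<in> U \<longrightarrow> \<delta> \<le> kalikow_drift_dot P l U x w)"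
    proof
      fix U :: "'d site set" assume "U \<in> {U. finite U}"
      then have U: "finite U" by simp
      show "AE w in P. \<forall>x\<in>U. (nn_connected U \<and> 0 \<in> U \<longrightarrow> \<delta> \<le> kalikow_drift_dot P l U x w)"
      proof (cases "nn_connected U \<and> 0 \<in> U")
        case True
        have "AE w in P. \<forall>x\<in>U. \<delta> \<le> kalikow_drift_dot P l U x w"
          using U True by (subst AE_ball_countable) (auto intro: countable_finite K.kal_main)
        then show ?thesis by (auto elim!: eventually_mono)
      next
        case False then show ?thesis by (intro AE_I2) auto
      qed
    qed
  qed
  then show ?thesis by (auto elim!: eventually_mono)
qed


end
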